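(* Consider the fully discrete implicit variable-step BDF2 scheme described in the context and let $\{u^n\}$ be its solution. Suppose the time-step ratios satisfy $r_k\le r_s$ for $2\le k\le N$ and \[ \tau_n<4\delta\min\Big\{R_L(r_n,r_{n+1}),\ \frac{2+r_2}{1+r_2}\Big\},\qquad 1\le n\le N, \] where $R_L(z,s)=\frac{2+4z-z^{3/2}}{1+z}-\frac{s^{3/2}}{1+s}$ (with $r_1:=0$). Then there is a constant $C_0$, independent of the spatial step $h$ and the time steps $\tau_n$, such that \[ \max\{\|\nabla_hu^n\|,\ \|\nabla_hu^n\|_{l^4},\ \|\Delta_hu^n\|\}\le C_0 . \]
   Context: Let $L>0$, $\Omega=(0,L)^2$, $M$ a positive integer, $h=L/M$, $x_i=ih$, $y_j=jh$, $\Omega_h=\{(x_i,y_j):1\le i,j\le M\}$, $\bar\Omega_h=\{(x_i,y_j):0\le i,j\le M\}$, and $\mathbb{V}_h$ the space of grid functions on $\bar\Omega_h$ that are $L$-periodic in each direction. For $v\in\mathbb{V}_h$: $\delta_x v_{i+1/2,j}=(v_{i+1,j}-v_{ij})/h$, $\Delta_x v_{ij}=(v_{i+1,j}-v_{i-1,j})/(2h)$, $\delta_x^2 v_{ij}=(\delta_xv_{i+1/2,j}-\delta_xv_{i-1/2,j})/h$, and analogously in $y$; $\Delta_h=\delta_x^2+\delta_y^2$, $\nabla_h v_{ij}=(\Delta_x v_{ij},\Delta_y v_{ij})^T$, and for a vector grid function $\mathbf{g}=(g_1,g_2)$, $\nabla_h\cdot \mathbf g=\Delta_x g_1+\Delta_y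 g_2$. Inner product $\langle v,w\rangle=h^2\sum_{\mathrm{x}_h\in\Omega_h}v_hw_h$, $\|v\|=\sqrt{\langle v,v\rangle}$, $\|v\|_{l^q}=(h^2\sum_{\mathrm{x}_h\in\Omega_h}|v_h|^q)^{1/q}$; for vector grid functions the pointwise Euclidean norm is used inside. Let $f(\mathbf{v})=(|\mathbf v|^2-1)\mathbf v$ and $\delta>0$. Time levels $0=t_0<t_1<\dots<t_N=T$, $\tau_n=t_n-t_{n-1}$, $r_n=\tau_n/\tau_{n-1}$ ($2\le n\le N$); $r_{N+1}\in(0,r_s]$ is an auxiliary ratio. $\nabla_\tau v^n=v^n-v^{n-1}$. BDF2 kernels: $b_0^{(1)}=2/\tau_1$, and for $n\ge2$, $b_0^{(n)}=\frac{1+2r_n}{\tau_n(1+r_n)}$, $b_1^{(n)}=-\frac{r_n^2}{\tau_n(1+r_n)}$, $b_j^{(n)}=0$ for $j\ge2$; $D_2v^n=\sum_{k=1}^n b_{n-k}^{(n)}\nabla_\tau v^k$. The scheme is: $D_2u_h^n+\delta\Delta_h^2u_h^n-\nabla_h\cdot f(\nabla_hu_h^n)=0$ for $\mathrm{x}_h\in\Omega_h$, $1\le n\le N$, with $u_h^0=\varphi_0(\mathrm{x}_h)-\frac{\tau_1}{2}\varphi_1(\mathrm{x}_h)$, $\varphi_1=\nabla\cdot f(\nabla\varphi_0)-\delta\Delta^2\varphi_0$ for given periodic smooth data $\varphi_0\in H^4(\Omega)$. $r_s$ is a fixed constant with $0<r_s<4.864$. *)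

theory Defs
  imports "HOL-Analysis.Analysis"
begin

definition pdx :: "(real \<times> real \<Rightarrow> real) \<Rightarrow> real \<times> real \<Rightarrow> real" where
  "pdx g = (\<lambda>(x,y). deriv (\<lambda>s. g (s,y)) x)"

definition pdy :: "(real \<times> real \<Rightarrow> real) \<Rightarrow> real \<times> real \<Rightarrow> real" where
  "pdy g = (\<lambda>(x,y). deriv (\<lambda>s. g (x,s)) y)"

text \<open>Smooth (C-infinity) functions on the plane: there is a class of continuous functions,
  containing g, which is closed under taking (existing) partial derivatives.\<close>
definition smooth_fun :: "(real \<times> real \<Rightarrow> real) \<Rightarrow> bool" where
  "smooth_fun g \<longleftrightarrow> (\<exists>S. g \<in> S \<and> (\<forall>f\<in>S. continuous_on UNIV f
      \<and> (\<forall>x y. (\<lambda>s. f (s,y)) differentiable (at x) \<and> (\<lambda>s. f (x,s)) differentiable (at y))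
      \<and> pdx f \<in> S \<and> pdy f \<in> S))"

definition periodic_L :: "real \<Rightarrow> (real \<times> real \<Rightarrow> real) \<Rightarrow> bool" where
  "periodic_L L g \<longleftrightarrow> (\<forall>x y. g (x+L, y) = g (x,y) \<and> g (x, y+L) = g (x,y))"

definition lap_c :: "(real \<times> real \<Rightarrow> real) \<Rightarrow> real \<times> real \<Rightarrow> real" where
  "lap_c g = (\<lambda>p. pdx (pdx g) p + pdy (pdy g) p)"

definition phi1 :: "real \<Rightarrow> (real \<times> real \<Rightarrow> real) \<Rightarrow> real \<times> real \<Rightarrow> real" where
  "phi1 \<delta> g = (let f1 = (\<lambda>p. ((pdx g p)\<^sup>2 + (pdy g p)\<^sup>2 - 1) * pdx g p);
                  f2 = (\<lambda>p. ((pdx g p)\<^sup>2 + (pdy g p)\<^sup>2 - 1) * pdy g p)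
              in (\<lambda>p. pdx f1 p + pdy f2 p - \<delta> * lap_c (lap_c g) p))"

section \<open>Grid functions (indexed by integers i, j; periodicity imposed separately)\<close>

type_synonym grid = "int \<Rightarrow> int \<Rightarrow> real"

definition grid_periodic :: "nat \<Rightarrow> grid \<Rightarrow> bool" where
  "grid_periodic M v \<longleftrightarrow> (\<forall>i j. v (i + int M) j = v i j \<and> v i (j + int M) = v i j)"

definition Dxc :: "real \<Rightarrow> grid \<Rightarrow> grid" where
  "Dxc h v = (\<lambda>i j. (v (i+1) j - v (i-1) j) / (2*h))"
definition Dyc :: "real \<Rightarrow> grid \<Rightarrow> grid" where
  "Dyc h v = (\<lambda>i j. (v i (j+1) - v i (j-1)) / (2*h))"

definition dxx :: "real \<Rightarrow> grid \<Rightarrow> grid" where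
  "dxx h v = (\<lambda>i j. ((v (i+1) j - v i j)/h - (v i j - v (i-1) j)/h) / h)"
definition dyy :: "real \<Rightarrow> grid \<Rightarrow> grid" where
  "dyy h v = (\<lambda>i j. ((v i (j+1) - v i j)/h - (v i j - v i (j-1))/h) / h)"

definition lap_h :: "real \<Rightarrow> grid \<Rightarrow> grid" where
  "lap_h h v = (\<lambda>i j. dxx h v i j + dyy h v i j)"

definition divf_h :: "real \<Rightarrow> grid \<Rightarrow> grid" where
  "divf_h h v = (let g1 = (\<lambda>i j. ((Dxc h v i j)\<^sup>2 + (Dyc h v i j)\<^sup>2 - 1) * Dxc h v i j);
                     g2 = (\<lambda>i j. ((Dxc h v i j)\<^sup>2 + (Dyc h v i j)\<^sup>2 - 1) * Dyc h v i j)
                 in (\<lambda>i j. Dxc h g1 i j + Dyc h g2 i j))"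

definition grid_sum :: "nat \<Rightarrow> real \<Rightarrow> grid \<Rightarrow> real" where
  "grid_sum M h w = h\<^sup>2 * (\<Sum>i\<in>{1..int M}. \<Sum>j\<in>{1..int M}. w i j)"

definition l2norm :: "nat \<Rightarrow> real \<Rightarrow> grid \<Rightarrow> real" where
  "l2norm M h v = sqrt (grid_sum M h (\<lambda>i j. (v i j)\<^sup>2))"

definition grad_l2norm :: "nat \<Rightarrow> real \<Rightarrow> grid \<Rightarrow> real" where
  "grad_l2norm M h v = sqrt (grid_sum M h (\<lambda>i j. (Dxc h v i j)\<^sup>2 + (Dyc h v i j)\<^sup>2))"

definition grad_l4norm :: "nat \<Rightarrow> real \<Rightarrow> grid \<Rightarrow> real" where
  "grad_l4norm M h v = root 4 (grid_sum M h (\<lambda>i j. (sqrt ((Dxc h v i j)\<^sup>2 + (Dyc h v i j)\<^sup>2)) ^ 4))"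

text \<open>Step ratios: r_1 = 0, r_n = tau_n / tau_(n-1) for 2 <= n <= N, r_(N+1) = auxiliary value.\<close>
definition ratio :: "(nat \<Rightarrow> real) \<Rightarrow> nat \<Rightarrow> real \<Rightarrow> nat \<Rightarrow> real" where
  "ratio \<tau> N rN1 n = (if n \<le> 1 then 0 else if n = N + 1 then rN1 else \<tau> n / \<tau> (n - 1))"

definition R_L :: "real \<Rightarrow> real \<Rightarrow> real" where
  "R_L z s = (2 + 4*z - z powr (3/2)) / (1 + z) - s powr (3/2) / (1 + s)"

text \<open>BDF2 operator D_2 v^n = sum_k b_(n-k)^(n) (v^k - v^(k-1)).\<close>
definition D2 :: "(nat \<Rightarrow> real) \<Rightarrow> (nat \<Rightarrow> grid) \<Rightarrow> nat \<Rightarrow> grid" where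
  "D2 \<tau> u n = (\<lambda>i j.
     (if n = 1 then (2 / \<tau> 1) * (u 1 i j - u 0 i j)
      else (let r = \<tau> n / \<tau> (n-1) in
            (1 + 2*r) / (\<tau> n * (1 + r)) * (u n i j - u (n-1) i j)
            - r\<^sup>2 / (\<tau> n * (1 + r)) * (u (n-1) i j - u (n-2) i j))))"

definition is_bdf2_solution ::
  "real \<Rightarrow> real \<Rightarrow> (real \<times> real \<Rightarrow> real) \<Rightarrow> nat \<Rightarrow> nat \<Rightarrow> (nat \<Rightarrow> real) \<Rightarrow> (nat \<Rightarrow> grid) \<Rightarrow> bool"
where
  "is_bdf2_solution L \<delta> \<phi>0 M N \<tau> u \<longleftrightarrow>
     (let h = L / real M in
      (\<forall>n\<le>N. grid_periodic M (u n)) \<and>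
      (\<forall>i\<in>{0..int M}. \<forall>j\<in>{0..int M}.
          u 0 i j = \<phi>0 (of_int i * h, of_int j * h) - \<tau> 1 / 2 * phi1 \<delta> \<phi>0 (of_int i * h, of_int j * h)) \<and>
      (\<forall>n\<in>{1..N}. \<forall>i\<in>{1..int M}. \<forall>j\<in>{1..int M}.
          D2 \<tau> u n i j + \<delta> * lap_h h (lap_h h (u n)) i j - divf_h h (u n) i j = 0))"

end

theory Submission
  imports Defs
begin


lemma deriv_shift_eq: "deriv f (x + c) = deriv (\<lambda>s. f (s + c)) (x::real)"
  unfolding deriv_def by (simp add: DERIV_shift)

lemma periodic_pdx: "periodic_L L g \<Longrightarrow> periodic_L L (pdx g)"
proof -
  assume p: "periodic_L L g"
  have e1: "(\<lambda>s. g (s + L, y)) = (\<lambda>s. g (s, y))" for y using p by (simp add: periodic_L_def)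
  have e2: "(\<lambda>s. g (x, s + L)) = (\<lambda>s. g (x, s))" for x using p by (simp add: periodic_L_def)
  have e3: "(\<lambda>s. g (s, y + L)) = (\<lambda>s. g (s, y))" for y using p by (simp add: periodic_L_def)
  show ?thesis unfolding periodic_L_def pdx_def using e1 e3 by (simp add: deriv_shift_eq)
qed

lemma periodic_pdy: "periodic_L L g \<Longrightarrow> periodic_L L (pdy g)"
proof -
  assume p: "periodic_L L g"
  have e2: "(\<lambda>s. g (x, s + L)) = (\<lambda>s. g (x, s))" for x using p by (simp add: periodic_L_def)
  have e3: "(\<lambda>s. g (x + L, s)) = (\<lambda>s. g (x, s))" for x using p by (simp add: periodic_L_def)
  show ?thesis unfolding periodic_L_def pdy_def using e2 e3 by (simp add: deriv_shift_eq)
qed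

lemma periodic_lap: "periodic_L L g \<Longrightarrow> periodic_L L (lap_c g)"
  using periodic_pdx periodic_pdy unfolding lap_c_def periodic_L_def by metis

lemma periodic_phi1: "periodic_L L g \<Longrightarrow> periodic_L L (phi1 \<delta> g)"
proof -
  assume p: "periodic_L L g"
  define f1 where "f1 = (\<lambda>p. ((pdx g p)\<^sup>2 + (pdy g p)\<^sup>2 - 1) * pdx g p)"
  define f2 where "f2 = (\<lambda>p. ((pdx g p)\<^sup>2 + (pdy g p)\<^sup>2 - 1) * pdy g p)"
  have "periodic_L L f1" "periodic_L L f2"
    using periodic_pdx[OF p] periodic_pdy[OF p] unfolding f1_def f2_def periodic_L_def by auto
  then have "periodic_L L (pdx f1)" "periodic_L L (pdy f2)" "periodic_L L (lap_c (lap_c g))"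
    using periodic_pdx periodic_pdy periodic_lap p by auto
  then show ?thesis unfolding phi1_def Let_def f1_def[symmetric] f2_def[symmetric] periodic_L_def
    by auto
qed

inductive alg :: "(real \<times> real \<Rightarrow> real) set \<Rightarrow> (real \<times> real \<Rightarrow> real) \<Rightarrow> bool" for S where
  base: "f \<in> S \<Longrightarrow> alg S f"
| const: "alg S (\<lambda>p. c)"
| add: "alg S f \<Longrightarrow> alg S g \<Longrightarrow> alg S (\<lambda>p. f p + g p)"
| mult: "alg S f \<Longrightarrow> alg S g \<Longrightarrow> alg S (\<lambda>p. f p * g p)"

definition goodS where "goodS S \<longleftrightarrow> (\<forall>f\<in>S. continuous_on UNIV f
      \<and> (\<forall>x y. (\<lambda>s. f (s,y)) differentiable (at x) \<and> (\<lambda>s. f (x,s)) differentiable (at y))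
      \<and> pdx f \<in> S \<and> pdy f \<in> S)"

lemma alg_props:
  assumes gS: "goodS S" and a: "alg S f"
  shows "continuous_on UNIV f \<and> (\<forall>x y. ((\<lambda>s. f (s,y)) has_real_derivative pdx f (x,y)) (at x))
     \<and> (\<forall>x y. ((\<lambda>s. f (x,s)) has_real_derivative pdy f (x,y)) (at y)) \<and> alg S (pdx f) \<and> alg S (pdy f)"
  using a
proof (induction rule: alg.induct)
  case (base f)
  then show ?case using gS unfolding goodS_def pdx_def pdy_def
    by (auto simp: DERIV_deriv_iff_real_differentiable intro: alg.base)
next
  case (const c)
  have "pdx (\<lambda>p. c) = (\<lambda>p. 0)" "pdy (\<lambda>p. c) = (\<lambda>p. 0)"
    unfolding pdx_def pdy_def by (auto intro!: ext DERIV_imp_deriv)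
  then show ?case by (auto intro: alg.const)
next
  case (add f g)
  have fx: "\<And>x y. ((\<lambda>s. f (s,y)) has_real_derivative deriv (\<lambda>s. f (s,y)) x) (at x)"
   and gx: "\<And>x y. ((\<lambda>s. g (s,y)) has_real_derivative deriv (\<lambda>s. g (s,y)) x) (at x)"
   and fy: "\<And>x y. ((\<lambda>s. f (x,s)) has_real_derivative deriv (\<lambda>s. f (x,s)) y) (at y)"
   and gy: "\<And>x y. ((\<lambda>s. g (x,s)) has_real_derivative deriv (\<lambda>s. g (x,s)) y) (at y)"
    using add.IH by (auto simp: pdx_def pdy_def)
  have dx: "pdx (\<lambda>p. f p + g p) = (\<lambda>p. pdx f p + pdx g p)"
    unfolding pdx_def by (auto intro!: ext DERIV_imp_deriv DERIV_add fx gx)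
  have dy: "pdy (\<lambda>p. f p + g p) = (\<lambda>p. pdy f p + pdy g p)"
    unfolding pdy_def by (auto intro!: ext DERIV_imp_deriv DERIV_add fy gy)
  show ?case unfolding dx dy using add by (auto intro!: alg.add continuous_intros DERIV_add)
next
  case (mult f g)
  have fx: "\<And>x y. ((\<lambda>s. f (s,y)) has_real_derivative deriv (\<lambda>s. f (s,y)) x) (at x)"
   and gx: "\<And>x y. ((\<lambda>s. g (s,y)) has_real_derivative deriv (\<lambda>s. g (s,y)) x) (at x)"
   and fy: "\<And>x y. ((\<lambda>s. f (x,s)) has_real_derivative deriv (\<lambda>s. f (x,s)) y) (at y)"
   and gy: "\<And>x y. ((\<lambda>s. g (x,s)) has_real_derivative deriv (\<lambda>s. g (x,s)) y) (at y)"
    using mult.IH by (auto simp: pdx_def pdy_def)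
  have dx: "pdx (\<lambda>p. f p * g p) = (\<lambda>p. pdx f p * g p + pdx g p * f p)"
    unfolding pdx_def by (auto intro!: ext DERIV_imp_deriv DERIV_mult fx gx)
  have dy: "pdy (\<lambda>p. f p * g p) = (\<lambda>p. pdy f p * g p + pdy g p * f p)"
    unfolding pdy_def by (auto intro!: ext DERIV_imp_deriv DERIV_mult fy gy)
  show ?case unfolding dx dy using mult by (auto intro!: alg.add alg.mult continuous_intros DERIV_mult)
qed


lemma alg_diff: "alg S f \<Longrightarrow> alg S g \<Longrightarrow> alg S (\<lambda>p. f p - g p)"
proof -
  assume "alg S f" "alg S g"
  then have "alg S (\<lambda>p. f p + (\<lambda>p. (-1::real)) p * g p)" by (intro alg.add alg.mult alg.const)
  then show ?thesis by simp
qed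

lemma alg_scale: "alg S g \<Longrightarrow> alg S (\<lambda>p. c * g p)"
  by (intro alg.mult alg.const)

lemma alg_sq: "alg S g \<Longrightarrow> alg S (\<lambda>p. (g p)\<^sup>2)"
  using alg.mult[of S g g] by (simp add: power2_eq_square)

lemma alg_pdx: "goodS S \<Longrightarrow> alg S f \<Longrightarrow> alg S (pdx f)" using alg_props by blast
lemma alg_pdy: "goodS S \<Longrightarrow> alg S f \<Longrightarrow> alg S (pdy f)" using alg_props by blast

lemma alg_lap: "goodS S \<Longrightarrow> alg S f \<Longrightarrow> alg S (lap_c f)"
  unfolding lap_c_def by (intro alg.add alg_pdx alg_pdy)

lemma alg_phi1: "goodS S \<Longrightarrow> alg S g \<Longrightarrow> alg S (phi1 \<delta> g)"
  unfolding phi1_def Let_def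
  by (intro alg_diff alg.add alg_pdx alg_pdy alg.mult alg_scale alg_lap alg_sq alg.const) auto

lemma smooth_goodS: "smooth_fun g \<Longrightarrow> \<exists>S. goodS S \<and> g \<in> S"
  unfolding smooth_fun_def goodS_def by blast

lemma bounded_box:
  assumes "continuous_on UNIV (f :: real \<times> real \<Rightarrow> real)"
  shows "\<exists>K. \<forall>x y. 0 \<le> x \<longrightarrow> x \<le> B \<longrightarrow> 0 \<le> y \<longrightarrow> y \<le> B \<longrightarrow> \<bar>f (x,y)\<bar> \<le> K"
proof -
  have "compact (f ` ({0..B} \<times> {0..B}))"
    by (rule compact_continuous_image) (auto intro: continuous_on_subset[OF assms] compact_Times)
  then obtain K where "\<forall>z\<in>f ` ({0..B} \<times> {0..B}). norm z \<le> K"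
    using compact_imp_bounded bounded_iff by metis
  then show ?thesis by (intro exI[of _ K]) auto
qed

lemma mvt_bound:
  fixes f f' :: "real \<Rightarrow> real"
  assumes "a < b" "\<And>s. a \<le> s \<Longrightarrow> s \<le> b \<Longrightarrow> DERIV f s :> f' s" "\<And>s. a \<le> s \<Longrightarrow> s \<le> b \<Longrightarrow> \<bar>f' s\<bar> \<le> K"
  shows "\<bar>f b - f a\<bar> \<le> (b - a) * K"
proof -
  obtain z where z: "a < z" "z < b" "f b - f a = (b - a) * f' z" using MVT2[OF assms(1), of f f'] assms(2) by blast
  have "\<bar>(b - a) * f' z\<bar> = (b - a) * \<bar>f' z\<bar>" using assms(1) by (simp add: abs_mult)
  also have "\<dots> \<le> (b - a) * K" using assms(3)[of z] z assms(1) by (intro mult_left_mono) auto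
  finally show ?thesis using z by simp
qed

lemma second_diff_bound:
  fixes f f' f'' :: "real \<Rightarrow> real"
  assumes t: "0 < t" and d1: "\<And>s. x - t \<le> s \<Longrightarrow> s \<le> x + t \<Longrightarrow> DERIV f s :> f' s"
    and d2: "\<And>s. x - t \<le> s \<Longrightarrow> s \<le> x + t \<Longrightarrow> DERIV f' s :> f'' s"
    and b1: "\<And>s. x - t \<le> s \<Longrightarrow> s \<le> x + t \<Longrightarrow> \<bar>f' s\<bar> \<le> Ka"
    and b2: "\<And>s. x - t \<le> s \<Longrightarrow> s \<le> x + t \<Longrightarrow> \<bar>f'' s\<bar> \<le> Kb"
  shows "\<bar>(f (x + t) - f (x - t)) / (2 * t)\<bar> \<le> Ka"
    and "\<bar>((f (x + t) - f x) / t - (f x - f (x - t)) / t) / t\<bar> \<le> Kb"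
proof -
  have "\<bar>f (x + t) - f (x - t)\<bar> \<le> ((x + t) - (x - t)) * Ka"
    by (rule mvt_bound) (use t d1 b1 in auto)
  then show "\<bar>(f (x + t) - f (x - t)) / (2 * t)\<bar> \<le> Ka" using t by (simp add: field_simps abs_divide)
next
  define g where "g s = f (s + t) - f s" for s
  have "\<exists>z. x - t < z \<and> z < x \<and> g x - g (x - t) = (x - (x - t)) * (f' (z + t) - f' z)"
  proof (rule MVT2)
    show "x - t < x" using t by simp
    fix s assume "x - t \<le> s" "s \<le> x"
    then show "DERIV g s :> f' (s + t) - f' s" unfolding g_def
      using d1[of "s + t"] d1[of s] t
      by (auto intro!: derivative_eq_intros simp: DERIV_shift[symmetric])
  qed
  then obtain z where z: "x - t < z" "z < x" "g x - g (x - t) = t * (f' (z + t) - f' z)" by auto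
  have "\<bar>f' (z + t) - f' z\<bar> \<le> ((z + t) - z) * Kb"
  proof (rule mvt_bound)
    fix s assume "z \<le> s" "s \<le> z + t"
    then have "x - t \<le> s" "s \<le> x + t" using z by auto
    then show "DERIV f' s :> f'' s" "\<bar>f'' s\<bar> \<le> Kb" using d2 b2 by auto
  qed (use t in auto)
  then have "\<bar>g x - g (x - t)\<bar> \<le> t * (t * Kb)" using z t by (simp add: abs_mult)
  moreover have "((f (x + t) - f x) / t - (f x - f (x - t)) / t) / t = (g x - g (x - t)) / (t * t)"
    unfolding g_def using t by (simp add: field_simps)
  moreover have "\<bar>(g x - g (x - t)) / (t * t)\<bar> = \<bar>g x - g (x - t)\<bar> / (t * t)"
    using t by (simp add: abs_divide)
  moreover have "\<bar>g x - g (x - t)\<bar> / (t * t) \<le> Kb"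
    using calculation(1) t by (simp add: divide_le_eq mult.commute mult.left_commute)
  ultimately show "\<bar>((f (x + t) - f x) / t - (f x - f (x - t)) / t) / t\<bar> \<le> Kb"
    by simp
qed


lemma alg_grid_bounds:
  assumes gS: "goodS S" and a: "alg S g"
  shows "\<exists>K. \<forall>x y t. 0 < t \<longrightarrow> 0 \<le> x - t \<longrightarrow> x + t \<le> B \<longrightarrow> 0 \<le> y - t \<longrightarrow> y + t \<le> B \<longrightarrow>
     \<bar>(g (x+t,y) - g (x-t,y)) / (2*t)\<bar> \<le> K \<and> \<bar>((g (x+t,y) - g (x,y))/t - (g (x,y) - g (x-t,y))/t)/t\<bar> \<le> K \<and>
     \<bar>(g (x,y+t) - g (x,y-t)) / (2*t)\<bar> \<le> K \<and> \<bar>((g (x,y+t) - g (x,y))/t - (g (x,y) - g (x,y-t))/t)/t\<bar> \<le> K"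
proof -
  have P: "\<And>f. alg S f \<Longrightarrow> continuous_on UNIV f \<and> (\<forall>x y. ((\<lambda>s. f (s,y)) has_real_derivative pdx f (x,y)) (at x))
     \<and> (\<forall>x y. ((\<lambda>s. f (x,s)) has_real_derivative pdy f (x,y)) (at y)) \<and> alg S (pdx f) \<and> alg S (pdy f)"
    using alg_props[OF gS] by blast
  have ax: "alg S (pdx g)" "alg S (pdx (pdx g))" "alg S (pdy g)" "alg S (pdy (pdy g))"
    using P a by blast+
  obtain K1 where K1: "\<And>x y. 0 \<le> x \<Longrightarrow> x \<le> B \<Longrightarrow> 0 \<le> y \<Longrightarrow> y \<le> B \<Longrightarrow> \<bar>pdx g (x,y)\<bar> \<le> K1"
    using bounded_box[of "pdx g" B] P[OF ax(1)] by blast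
  obtain K2 where K2: "\<And>x y. 0 \<le> x \<Longrightarrow> x \<le> B \<Longrightarrow> 0 \<le> y \<Longrightarrow> y \<le> B \<Longrightarrow> \<bar>pdx (pdx g) (x,y)\<bar> \<le> K2"
    using bounded_box[of "pdx (pdx g)" B] P[OF ax(2)] by blast
  obtain K3 where K3: "\<And>x y. 0 \<le> x \<Longrightarrow> x \<le> B \<Longrightarrow> 0 \<le> y \<Longrightarrow> y \<le> B \<Longrightarrow> \<bar>pdy g (x,y)\<bar> \<le> K3"
    using bounded_box[of "pdy g" B] P[OF ax(3)] by blast
  obtain K4 where K4: "\<And>x y. 0 \<le> x \<Longrightarrow> x \<le> B \<Longrightarrow> 0 \<le> y \<Longrightarrow> y \<le> B \<Longrightarrow> \<bar>pdy (pdy g) (x,y)\<bar> \<le> K4"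
    using bounded_box[of "pdy (pdy g)" B] P[OF ax(4)] by blast
  define K where "K = max (max K1 K2) (max K3 K4)"
  show ?thesis
  proof (intro exI[of _ K] allI impI)
    fix x y t :: real
    assume t: "0 < t" and h: "0 \<le> x - t" "x + t \<le> B" "0 \<le> y - t" "y + t \<le> B"
    have dx1: "DERIV (\<lambda>s. g (s,y)) s :> pdx g (s,y)" for s using P[OF a] by blast
    have dx2: "DERIV (\<lambda>s. pdx g (s,y)) s :> pdx (pdx g) (s,y)" for s using P[OF ax(1)] by blast
    have dy1: "DERIV (\<lambda>s. g (x,s)) s :> pdy g (x,s)" for s using P[OF a] by blast
    have dy2: "DERIV (\<lambda>s. pdy g (x,s)) s :> pdy (pdy g) (x,s)" for s using P[OF ax(3)] by blast
    have X1: "\<bar>(g (x+t,y) - g (x-t,y)) / (2*t)\<bar> \<le> K1"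
      by (rule second_diff_bound(1)[where f="\<lambda>s. g (s,y)" and f'="\<lambda>s. pdx g (s,y)" and f''="\<lambda>s. pdx (pdx g) (s,y)"
          and x=x and t=t and Ka=K1 and Kb=K2]) (use t h dx1 dx2 K1 K2 in auto)
    have X2: "\<bar>((g (x+t,y) - g (x,y))/t - (g (x,y) - g (x-t,y))/t)/t\<bar> \<le> K2"
      by (rule second_diff_bound(2)[where f="\<lambda>s. g (s,y)" and f'="\<lambda>s. pdx g (s,y)" and f''="\<lambda>s. pdx (pdx g) (s,y)"
          and x=x and t=t and Ka=K1 and Kb=K2]) (use t h dx1 dx2 K1 K2 in auto)
    have Y1: "\<bar>(g (x,y+t) - g (x,y-t)) / (2*t)\<bar> \<le> K3"
      by (rule second_diff_bound(1)[where f="\<lambda>s. g (x,s)" and f'="\<lambda>s. pdy g (x,s)" and f''="\<lambda>s. pdy (pdy g) (x,s)"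
          and x=y and t=t and Ka=K3 and Kb=K4]) (use t h dy1 dy2 K3 K4 in auto)
    have Y2: "\<bar>((g (x,y+t) - g (x,y))/t - (g (x,y) - g (x,y-t))/t)/t\<bar> \<le> K4"
      by (rule second_diff_bound(2)[where f="\<lambda>s. g (x,s)" and f'="\<lambda>s. pdy g (x,s)" and f''="\<lambda>s. pdy (pdy g) (x,s)"
          and x=y and t=t and Ka=K3 and Kb=K4]) (use t h dy1 dy2 K3 K4 in auto)
    note X = X1 X2 and Y = Y1 Y2
    show "\<bar>(g (x+t,y) - g (x-t,y)) / (2*t)\<bar> \<le> K \<and> \<bar>((g (x+t,y) - g (x,y))/t - (g (x,y) - g (x-t,y))/t)/t\<bar> \<le> K \<and>
     \<bar>(g (x,y+t) - g (x,y-t)) / (2*t)\<bar> \<le> K \<and> \<bar>((g (x,y+t) - g (x,y))/t - (g (x,y) - g (x,y-t))/t)/t\<bar> \<le> K"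
      using X Y unfolding K_def by linarith
  qed
qed




lemma tele_int: "(\<Sum>i\<in>{1..int n}. (f (i+1) - f i :: real)) = f (int n + 1) - f 1"
proof (induction n)
  case 0 then show ?case by simp
next
  case (Suc n)
  have e: "{1..int (Suc n)} = insert (int n + 1) {1..int n}" by auto
  show ?case unfolding e using Suc by (simp add: add.commute)
qed

definition per_x :: "nat \<Rightarrow> grid \<Rightarrow> bool" where "per_x M G \<longleftrightarrow> (\<forall>i j. G (i + int M) j = G i j)"
definition per_y :: "nat \<Rightarrow> grid \<Rightarrow> bool" where "per_y M G \<longleftrightarrow> (\<forall>i j. G i (j + int M) = G i j)"

lemma gs_add: "grid_sum M h (\<lambda>i j. a i j + b i j) = grid_sum M h a + grid_sum M h b"
  unfolding grid_sum_def by (simp add: sum.distrib distrib_left)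
lemma gs_diff: "grid_sum M h (\<lambda>i j. a i j - b i j) = grid_sum M h a - grid_sum M h b"
  unfolding grid_sum_def by (simp add: sum_subtractf right_diff_distrib)
lemma gs_scale: "grid_sum M h (\<lambda>i j. c * a i j) = c * grid_sum M h a"
  unfolding grid_sum_def by (simp add: sum_distrib_left mult.left_commute)
lemma gs_mono: "(\<And>i j. i \<in> {1..int M} \<Longrightarrow> j \<in> {1..int M} \<Longrightarrow> a i j \<le> b i j) \<Longrightarrow> grid_sum M h a \<le> grid_sum M h b"
  unfolding grid_sum_def by (intro mult_left_mono sum_mono) auto
lemma gs_cong: "(\<And>i j. i \<in> {1..int M} \<Longrightarrow> j \<in> {1..int M} \<Longrightarrow> a i j = b i j) \<Longrightarrow> grid_sum M h a = grid_sum M h b"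
  unfolding grid_sum_def by (intro arg_cong[where f="\<lambda>x. h\<^sup>2 * x"] sum.cong) auto
lemma gs_nonneg: "(\<And>i j. i \<in> {1..int M} \<Longrightarrow> j \<in> {1..int M} \<Longrightarrow> 0 \<le> a i j) \<Longrightarrow> 0 \<le> grid_sum M h a"
  using gs_mono[of M "\<lambda>i j. 0" a h] by (simp add: grid_sum_def)
lemma gs_const: "grid_sum M h (\<lambda>i j. c) = (h * real M)\<^sup>2 * c"
  unfolding grid_sum_def by (simp add: power2_eq_square)

lemma gs_tele_x: "per_x M G \<Longrightarrow> grid_sum M h (\<lambda>i j. G (i+1) j - G i j) = 0"
proof -
  assume p: "per_x M G"
  have "(\<Sum>i\<in>{1..int M}. \<Sum>j\<in>{1..int M}. G (i+1) j - G i j) = (\<Sum>j\<in>{1..int M}. \<Sum>i\<in>{1..int M}. G (i+1) j - G i j)"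
    by (rule sum.swap)
  also have "\<dots> = (\<Sum>j\<in>{1..int M}. G (int M + 1) j - G 1 j)"
    by (intro sum.cong refl) (rule tele_int[where f="\<lambda>i. G i j" for j])
  also have "\<dots> = 0" using p unfolding per_x_def by (simp add: add.commute)
  finally show ?thesis unfolding grid_sum_def by simp
qed

lemma gs_tele_y: "per_y M G \<Longrightarrow> grid_sum M h (\<lambda>i j. G i (j+1) - G i j) = 0"
proof -
  assume p: "per_y M G"
  have "(\<Sum>i\<in>{1..int M}. \<Sum>j\<in>{1..int M}. G i (j+1) - G i j) = (\<Sum>i\<in>{1..int M}. G i (int M + 1) - G i 1)"
    by (intro sum.cong refl) (rule tele_int[where f="\<lambda>j. G i j" for i])
  also have "\<dots> = 0" using p unfolding per_y_def by (simp add: add.commute)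
  finally show ?thesis unfolding grid_sum_def by simp
qed

lemma gs_tele:
  assumes "per_x M Gx" "per_y M Gy"
  shows "grid_sum M h (\<lambda>i j. Y i j + (Gx (i+1) j - Gx i j) + (Gy i (j+1) - Gy i j)) = grid_sum M h Y"
  using gs_tele_x[OF assms(1), of h] gs_tele_y[OF assms(2), of h] by (simp add: gs_add)

lemma gs_tele_le:
  assumes "per_x M Gx" "per_y M Gy"
    and "\<And>i j. X i j \<le> Y i j + (Gx (i+1) j - Gx i j) + (Gy i (j+1) - Gy i j)"
  shows "grid_sum M h X \<le> grid_sum M h Y"
proof -
  have "grid_sum M h X \<le> grid_sum M h (\<lambda>i j. Y i j + (Gx (i+1) j - Gx i j) + (Gy i (j+1) - Gy i j))"
    by (rule gs_mono) (rule assms(3))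
  then show ?thesis using gs_tele[OF assms(1,2)] by simp
qed

lemma gs_tele_eq:
  assumes "per_x M Gx" "per_y M Gy"
    and "\<And>i j. X i j = Y i j + (Gx (i+1) j - Gx i j) + (Gy i (j+1) - Gy i j)"
  shows "grid_sum M h X = grid_sum M h Y"
proof -
  have "grid_sum M h X = grid_sum M h (\<lambda>i j. Y i j + (Gx (i+1) j - Gx i j) + (Gy i (j+1) - Gy i j))"
    by (rule gs_cong) (rule assms(3))
  then show ?thesis using gs_tele[OF assms(1,2)] by simp
qed

lemma avg_sq: "((x + y) / 2)\<^sup>2 \<le> ((x::real)\<^sup>2 + y\<^sup>2) / 2"
proof -
  have "((x + y) / 2)\<^sup>2 = (x\<^sup>2 + y\<^sup>2) / 2 - ((x - y) / 2)\<^sup>2" by (simp add: power2_eq_square field_simps)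
  then show ?thesis using zero_le_power2[of "(x-y)/2"] by linarith
qed

lemma gpx0: "grid_periodic M v \<Longrightarrow> v (i + int M) j = v i j" unfolding grid_periodic_def by simp
lemma gpx1: "grid_periodic M v \<Longrightarrow> v (i + int M + 1) j = v (i + 1) j"
  unfolding grid_periodic_def by (metis add.commute add.left_commute)
lemma gpx2: "grid_periodic M v \<Longrightarrow> v (i + int M - 1) j = v (i - 1) j"
  unfolding grid_periodic_def by (metis add_diff_eq diff_add_eq)
lemma gpy0: "grid_periodic M v \<Longrightarrow> v i (j + int M) = v i j" unfolding grid_periodic_def by simp
lemma gpy1: "grid_periodic M v \<Longrightarrow> v i (j + int M + 1) = v i (j + 1)"
  unfolding grid_periodic_def by (metis add.commute add.left_commute)
lemma gpy2: "grid_periodic M v \<Longrightarrow> v i (j + int M - 1) = v i (j - 1)"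
  unfolding grid_periodic_def by (metis add_diff_eq diff_add_eq)
lemmas gpr = gpx0 gpx1 gpx2 gpy0 gpy1 gpy2

lemma gp_Dxc: assumes "grid_periodic M v" shows "grid_periodic M (Dxc h v)"
  unfolding grid_periodic_def Dxc_def using assms by (simp add: gpr)
lemma gp_Dyc: assumes "grid_periodic M v" shows "grid_periodic M (Dyc h v)"
  unfolding grid_periodic_def Dyc_def using assms by (simp add: gpr)
lemma gp_lap: assumes "grid_periodic M v" shows "grid_periodic M (lap_h h v)"
  unfolding grid_periodic_def lap_h_def dxx_def dyy_def using assms by (simp add: gpr)
lemma gp_diff: "grid_periodic M a \<Longrightarrow> grid_periodic M b \<Longrightarrow> grid_periodic M (\<lambda>i j. a i j - b i j)"
  unfolding grid_periodic_def by simp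

lemma sa_lap:
  assumes a: "grid_periodic M a" and b: "grid_periodic M b" and h: "h \<noteq> 0"
  shows "grid_sum M h (\<lambda>i j. lap_h h a i j * b i j) = grid_sum M h (\<lambda>i j. a i j * lap_h h b i j)"
proof (rule gs_tele_eq)
  let ?Gx = "\<lambda>i j. (a i j * b (i-1) j - a (i-1) j * b i j) / h\<^sup>2"
  let ?Gy = "\<lambda>i j. (a i j * b i (j-1) - a i (j-1) * b i j) / h\<^sup>2"
  show "per_x M ?Gx" unfolding per_x_def using a b by (simp add: gpr)
  show "per_y M ?Gy" unfolding per_y_def using a b by (simp add: gpr)
  fix i j
  show "lap_h h a i j * b i j = a i j * lap_h h b i j + (?Gx (i+1) j - ?Gx i j) + (?Gy i (j+1) - ?Gy i j)"
    unfolding lap_h_def dxx_def dyy_def using h by (simp add: field_simps power2_eq_square)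
qed

lemma sbp_D:
  assumes g1: "grid_periodic M g1" and g2: "grid_periodic M g2" and w: "grid_periodic M w" and h: "h \<noteq> 0"
  shows "grid_sum M h (\<lambda>i j. (Dxc h g1 i j + Dyc h g2 i j) * w i j)
       = - grid_sum M h (\<lambda>i j. g1 i j * Dxc h w i j + g2 i j * Dyc h w i j)"
proof -
  have "grid_sum M h (\<lambda>i j. (Dxc h g1 i j + Dyc h g2 i j) * w i j + (g1 i j * Dxc h w i j + g2 i j * Dyc h w i j))
     = grid_sum M h (\<lambda>i j. 0)"
  proof (rule gs_tele_eq)
    let ?Gx = "\<lambda>i j. (g1 i j * w (i-1) j + g1 (i-1) j * w i j) / (2*h)"
    let ?Gy = "\<lambda>i j. (g2 i j * w i (j-1) + g2 i (j-1) * w i j) / (2*h)"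
    show "per_x M ?Gx" unfolding per_x_def using g1 w by (simp add: gpr)
    show "per_y M ?Gy" unfolding per_y_def using g2 w by (simp add: gpr)
    fix i j
    show "(Dxc h g1 i j + Dyc h g2 i j) * w i j + (g1 i j * Dxc h w i j + g2 i j * Dyc h w i j)
        = 0 + (?Gx (i+1) j - ?Gx i j) + (?Gy i (j+1) - ?Gy i j)"
      unfolding Dxc_def Dyc_def using h by (simp add: field_simps)
  qed
  then show ?thesis by (simp add: gs_add grid_sum_def)
qed

lemma grad_bound:
  assumes w: "grid_periodic M w" and h: "h \<noteq> 0"
  shows "grid_sum M h (\<lambda>i j. (Dxc h w i j)\<^sup>2 + (Dyc h w i j)\<^sup>2) \<le> - grid_sum M h (\<lambda>i j. w i j * lap_h h w i j)"
proof -
  have "grid_sum M h (\<lambda>i j. (Dxc h w i j)\<^sup>2 + (Dyc h w i j)\<^sup>2) \<le> grid_sum M h (\<lambda>i j. - (w i j * lap_h h w i j))"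
  proof (rule gs_tele_le)
    let ?ax = "\<lambda>i j. (w (i+1) j - w i j) / h"
    let ?ay = "\<lambda>i j. (w i (j+1) - w i j) / h"
    let ?Gx = "\<lambda>i j. ((w i j)\<^sup>2 - w i j * w (i-1) j) / h\<^sup>2 - (?ax (i-1) j)\<^sup>2 / 2"
    let ?Gy = "\<lambda>i j. ((w i j)\<^sup>2 - w i j * w i (j-1)) / h\<^sup>2 - (?ay i (j-1))\<^sup>2 / 2"
    show "per_x M ?Gx" unfolding per_x_def using w by (simp add: gpr)
    show "per_y M ?Gy" unfolding per_y_def using w by (simp add: gpr)
    fix i j
    have ex: "Dxc h w i j = (?ax i j + ?ax (i-1) j) / 2" unfolding Dxc_def using h by (simp add: field_simps)
    have ey: "Dyc h w i j = (?ay i j + ?ay i (j-1)) / 2" unfolding Dyc_def using h by (simp add: field_simps)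
    have ix: "(Dxc h w i j)\<^sup>2 \<le> ((?ax i j)\<^sup>2 + (?ax (i-1) j)\<^sup>2) / 2"
      unfolding ex by (rule avg_sq)
    have iy: "(Dyc h w i j)\<^sup>2 \<le> ((?ay i j)\<^sup>2 + (?ay i (j-1))\<^sup>2) / 2"
      unfolding ey by (rule avg_sq)
    have eq: "((?ax i j)\<^sup>2 + (?ax (i-1) j)\<^sup>2) / 2 + ((?ay i j)\<^sup>2 + (?ay i (j-1))\<^sup>2) / 2
        = - (w i j * lap_h h w i j) + (?Gx (i+1) j - ?Gx i j) + (?Gy i (j+1) - ?Gy i j)"
      unfolding lap_h_def dxx_def dyy_def using h by (simp add: field_simps power2_eq_square)
    show "(Dxc h w i j)\<^sup>2 + (Dyc h w i j)\<^sup>2 \<le> - (w i j * lap_h h w i j) + (?Gx (i+1) j - ?Gx i j) + (?Gy i (j+1) - ?Gy i j)"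
      using ix iy eq by linarith
  qed
  then show ?thesis by (simp add: grid_sum_def sum_negf)
qed




lemma nl_ineq:
  fixes a1 a2 b1 b2 :: real
  shows "(a1\<^sup>2+a2\<^sup>2-1)*a1*(a1-b1) + (a1\<^sup>2+a2\<^sup>2-1)*a2*(a2-b2) \<ge>
         (a1\<^sup>2+a2\<^sup>2-1)\<^sup>2/4 - (b1\<^sup>2+b2\<^sup>2-1)\<^sup>2/4 - ((a1-b1)\<^sup>2+(a2-b2)\<^sup>2)/2"
proof -
  have e: "(a1\<^sup>2+a2\<^sup>2-1)*a1*(a1-b1) + (a1\<^sup>2+a2\<^sup>2-1)*a2*(a2-b2) -
         ((a1\<^sup>2+a2\<^sup>2-1)\<^sup>2/4 - (b1\<^sup>2+b2\<^sup>2-1)\<^sup>2/4 - ((a1-b1)\<^sup>2+(a2-b2)\<^sup>2)/2)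
       = ((b1\<^sup>2+b2\<^sup>2) - (a1\<^sup>2+a2\<^sup>2))\<^sup>2/4 + (a1\<^sup>2+a2\<^sup>2) * ((a1-b1)\<^sup>2+(a2-b2)\<^sup>2)/2"
    by (simp add: power2_eq_square field_simps)
  have "0 \<le> ((b1\<^sup>2+b2\<^sup>2) - (a1\<^sup>2+a2\<^sup>2))\<^sup>2/4 + (a1\<^sup>2+a2\<^sup>2) * ((a1-b1)\<^sup>2+(a2-b2)\<^sup>2)/2"
    by (intro add_nonneg_nonneg divide_nonneg_nonneg mult_nonneg_nonneg) auto
  then show ?thesis using e by linarith
qed

lemma amgm:
  fixes a b d :: real
  assumes "d > 0" shows "- (a * b) \<le> (1 / (4*d)) * a\<^sup>2 + d * b\<^sup>2"
proof -
  have "(1 / (4*d)) * a\<^sup>2 + d * b\<^sup>2 + a * b = (a + 2*d*b)\<^sup>2 / (4*d)"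
    using assms by (simp add: field_simps power2_eq_square)
  moreover have "(a + 2*d*b)\<^sup>2 / (4*d) \<ge> 0" using assms by simp
  ultimately show ?thesis by linarith
qed

definition Fn :: "nat \<Rightarrow> real \<Rightarrow> grid \<Rightarrow> real" where
  "Fn M h v = grid_sum M h (\<lambda>i j. ((Dxc h v i j)\<^sup>2 + (Dyc h v i j)\<^sup>2 - 1)\<^sup>2 / 4)"
definition Lapn :: "nat \<Rightarrow> real \<Rightarrow> grid \<Rightarrow> real" where
  "Lapn M h v = grid_sum M h (\<lambda>i j. (lap_h h v i j)\<^sup>2)"
definition Wn :: "nat \<Rightarrow> real \<Rightarrow> grid \<Rightarrow> real" where
  "Wn M h v = grid_sum M h (\<lambda>i j. (v i j)\<^sup>2)"

lemma energy_step:
  fixes U U' w D :: grid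
  assumes U: "grid_periodic M U" and U': "grid_periodic M U'" and h: "h \<noteq> 0" and dl: "\<delta> > 0"
    and w: "\<And>i j. w i j = U i j - U' i j"
    and eq: "\<And>i j. i \<in> {1..int M} \<Longrightarrow> j \<in> {1..int M} \<Longrightarrow>
              D i j + \<delta> * lap_h h (lap_h h U) i j - divf_h h U i j = 0"
  shows "grid_sum M h (\<lambda>i j. 2 * D i j * w i j) + \<delta> * Lapn M h U + 2 * Fn M h U
         \<le> \<delta> * Lapn M h U' + 2 * Fn M h U' + Wn M h w / (4 * \<delta>)"
proof -
  have we: "w = (\<lambda>i j. U i j - U' i j)" using w by auto
  have gw: "grid_periodic M w" unfolding we by (rule gp_diff[OF U U'])
  define g1 where "g1 = (\<lambda>i j. ((Dxc h U i j)\<^sup>2 + (Dyc h U i j)\<^sup>2 - 1) * Dxc h U i j)"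
  define g2 where "g2 = (\<lambda>i j. ((Dxc h U i j)\<^sup>2 + (Dyc h U i j)\<^sup>2 - 1) * Dyc h U i j)"
  have gg1: "grid_periodic M g1" unfolding g1_def grid_periodic_def Dxc_def Dyc_def using U by (simp add: gpr)
  have gg2: "grid_periodic M g2" unfolding g2_def grid_periodic_def Dxc_def Dyc_def using U by (simp add: gpr)
  have divf: "divf_h h U = (\<lambda>i j. Dxc h g1 i j + Dyc h g2 i j)"
    unfolding divf_h_def g1_def g2_def Let_def by simp
  have lw: "lap_h h w i j = lap_h h U i j - lap_h h U' i j" for i j
    unfolding we lap_h_def dxx_def dyy_def using h by (simp add: field_simps)
  have dxw: "Dxc h w i j = Dxc h U i j - Dxc h U' i j" for i j
    unfolding we Dxc_def using h by (simp add: field_simps)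
  have dyw: "Dyc h w i j = Dyc h U i j - Dyc h U' i j" for i j
    unfolding we Dyc_def using h by (simp add: field_simps)
  have s1: "grid_sum M h (\<lambda>i j. 2 * D i j * w i j) =
      grid_sum M h (\<lambda>i j. (-2*\<delta>) * (lap_h h (lap_h h U) i j * w i j)) + grid_sum M h (\<lambda>i j. 2 * ((Dxc h g1 i j + Dyc h g2 i j) * w i j))"
    unfolding gs_add[symmetric]
  proof (rule gs_cong)
    fix i j assume "i \<in> {1..int M}" "j \<in> {1..int M}"
    then have D': "D i j = - \<delta> * lap_h h (lap_h h U) i j + (Dxc h g1 i j + Dyc h g2 i j)"
      using eq divf by (simp add: algebra_simps)
    show "2 * D i j * w i j = (-2*\<delta>) * (lap_h h (lap_h h U) i j * w i j) + 2 * ((Dxc h g1 i j + Dyc h g2 i j) * w i j)"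
      unfolding D' by (simp add: algebra_simps)
  qed
  have s2: "grid_sum M h (\<lambda>i j. lap_h h (lap_h h U) i j * w i j) = grid_sum M h (\<lambda>i j. lap_h h U i j * lap_h h w i j)"
    by (rule sa_lap[OF gp_lap[OF U] gw h])
  have s3: "grid_sum M h (\<lambda>i j. (Dxc h g1 i j + Dyc h g2 i j) * w i j) = - grid_sum M h (\<lambda>i j. g1 i j * Dxc h w i j + g2 i j * Dyc h w i j)"
    by (rule sbp_D[OF gg1 gg2 gw h])
  have s4: "grid_sum M h (\<lambda>i j. 2 * (lap_h h U i j * lap_h h w i j)) = Lapn M h U - Lapn M h U' + Lapn M h w"
    unfolding Lapn_def gs_add[symmetric] gs_diff[symmetric] lw by (rule gs_cong) (simp add: power2_eq_square algebra_simps)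
  have s5: "grid_sum M h (\<lambda>i j. g1 i j * Dxc h w i j + g2 i j * Dyc h w i j) \<ge>
        grid_sum M h (\<lambda>i j. ((Dxc h U i j)\<^sup>2 + (Dyc h U i j)\<^sup>2 - 1)\<^sup>2 / 4 - ((Dxc h U' i j)\<^sup>2 + (Dyc h U' i j)\<^sup>2 - 1)\<^sup>2 / 4
             - ((Dxc h w i j)\<^sup>2 + (Dyc h w i j)\<^sup>2) / 2)"
    by (rule gs_mono) (unfold g1_def g2_def dxw dyw, rule nl_ineq)
  have s5': "grid_sum M h (\<lambda>i j. ((Dxc h U i j)\<^sup>2 + (Dyc h U i j)\<^sup>2 - 1)\<^sup>2 / 4 - ((Dxc h U' i j)\<^sup>2 + (Dyc h U' i j)\<^sup>2 - 1)\<^sup>2 / 4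
             - ((Dxc h w i j)\<^sup>2 + (Dyc h w i j)\<^sup>2) / 2)
      = Fn M h U - Fn M h U' - grid_sum M h (\<lambda>i j. (Dxc h w i j)\<^sup>2 + (Dyc h w i j)\<^sup>2) / 2"
    unfolding Fn_def gs_diff by (simp add: gs_scale[of _ _ "1/2", simplified])
  have s6: "grid_sum M h (\<lambda>i j. (Dxc h w i j)\<^sup>2 + (Dyc h w i j)\<^sup>2) \<le> - grid_sum M h (\<lambda>i j. w i j * lap_h h w i j)"
    by (rule grad_bound[OF gw h])
  have s7: "- grid_sum M h (\<lambda>i j. w i j * lap_h h w i j) \<le> Wn M h w / (4 * \<delta>) + \<delta> * Lapn M h w"
  proof -
    have "grid_sum M h (\<lambda>i j. - (w i j * lap_h h w i j)) \<le> grid_sum M h (\<lambda>i j. (1 / (4*\<delta>)) * (w i j)\<^sup>2 + \<delta> * (lap_h h w i j)\<^sup>2)"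
    proof (rule gs_mono)
      fix i j
      show "- (w i j * lap_h h w i j) \<le> (1 / (4*\<delta>)) * (w i j)\<^sup>2 + \<delta> * (lap_h h w i j)\<^sup>2"
        by (rule amgm[OF dl])
    qed
    then show ?thesis unfolding Wn_def Lapn_def gs_add gs_scale
      by (simp add: grid_sum_def sum_negf)
  qed
  have s1': "grid_sum M h (\<lambda>i j. 2 * D i j * w i j) = -2*\<delta> * grid_sum M h (\<lambda>i j. lap_h h (lap_h h U) i j * w i j)
      + 2 * grid_sum M h (\<lambda>i j. (Dxc h g1 i j + Dyc h g2 i j) * w i j)"
    using s1 unfolding gs_scale by simp
  have s4': "2 * grid_sum M h (\<lambda>i j. lap_h h U i j * lap_h h w i j) = Lapn M h U - Lapn M h U' + Lapn M h w"
    using s4 unfolding gs_scale by simp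
  have s8: "-2*\<delta> * grid_sum M h (\<lambda>i j. lap_h h (lap_h h U) i j * w i j) = - (\<delta> * (Lapn M h U - Lapn M h U' + Lapn M h w))"
    using s2 s4' by (metis mult.assoc mult.commute mult_minus_left)
  show ?thesis
    using s1' s8 s3 s5 s5' s6 s7 by (simp add: algebra_simps)
qed




lemma ext_rep:
  assumes gp: "grid_periodic M u" and M: "M \<ge> 1" and hd: "h = L / real M"
    and pG: "periodic_L L G"
    and rep: "\<forall>i\<in>{0..int M}. \<forall>j\<in>{0..int M}. u i j = G (of_int i * h, of_int j * h)"
    and i: "i \<in> {0..int M + 1}" and j: "j \<in> {0..int M + 1}"
  shows "u i j = G (of_int i * h, of_int j * h)"
proof -
  define i' where "i' = (if i = int M + 1 then 1 else i)"
  define j' where "j' = (if j = int M + 1 then 1 else j)"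
  have Mh: "real M * h = L" using M hd by simp
  have ui: "u i j = u i' j'"
    using gp unfolding i'_def j'_def grid_periodic_def by (auto simp: add.commute)
  have Gi: "G (of_int i * h, of_int j * h) = G (of_int i' * h, of_int j' * h)"
  proof -
    have a: "G (of_int i * h, y) = G (of_int i' * h, y)" for y
    proof (cases "i = int M + 1")
      case True
      then have "of_int i * h = h + L" using Mh by (simp add: algebra_simps)
      then show ?thesis using pG True unfolding i'_def periodic_L_def by simp
    qed (simp add: i'_def)
    have b: "G (x, of_int j * h) = G (x, of_int j' * h)" for x
    proof (cases "j = int M + 1")
      case True
      then have "of_int j * h = h + L" using Mh by (simp add: algebra_simps)
      then show ?thesis using pG True unfolding j'_def periodic_L_def by simp
    qed (simp add: j'_def)
    show ?thesis using a b by simp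
  qed
  have "i' \<in> {0..int M}" "j' \<in> {0..int M}" using i j M unfolding i'_def j'_def by auto
  then show ?thesis using rep ui Gi by simp
qed

lemma init_bound:
  assumes L: "L > 0" and dl: "\<delta> > 0" and sm: "smooth_fun \<phi>0" and per: "periodic_L L \<phi>0"
  shows "\<exists>Kd\<ge>0. \<forall>M u t1. M \<ge> 1 \<longrightarrow> 0 < t1 \<longrightarrow> t1 \<le> 8*\<delta> \<longrightarrow> grid_periodic M u \<longrightarrow>
     (\<forall>i\<in>{0..int M}. \<forall>j\<in>{0..int M}. u i j = \<phi>0 (of_int i * (L / real M), of_int j * (L / real M))
        - t1 / 2 * phi1 \<delta> \<phi>0 (of_int i * (L / real M), of_int j * (L / real M))) \<longrightarrow>
     (\<forall>i\<in>{1..int M}. \<forall>j\<in>{1..int M}. \<bar>Dxc (L / real M) u i j\<bar> \<le> Kd \<and> \<bar>Dyc (L / real M) u i j\<bar> \<le> Kd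
        \<and> \<bar>lap_h (L / real M) u i j\<bar> \<le> 2 * Kd)"
proof -
  obtain S where gS: "goodS S" and inS: "\<phi>0 \<in> S" using smooth_goodS[OF sm] by blast
  have a0: "alg S \<phi>0" using inS by (rule alg.base)
  have a1: "alg S (phi1 \<delta> \<phi>0)" by (rule alg_phi1[OF gS a0])
  obtain Ka where Ka: "\<forall>x y t. 0 < t \<longrightarrow> 0 \<le> x - t \<longrightarrow> x + t \<le> 2*L \<longrightarrow> 0 \<le> y - t \<longrightarrow> y + t \<le> 2*L \<longrightarrow>
     \<bar>(\<phi>0 (x+t,y) - \<phi>0 (x-t,y)) / (2*t)\<bar> \<le> Ka \<and> \<bar>((\<phi>0 (x+t,y) - \<phi>0 (x,y))/t - (\<phi>0 (x,y) - \<phi>0 (x-t,y))/t)/t\<bar> \<le> Ka \<and>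
     \<bar>(\<phi>0 (x,y+t) - \<phi>0 (x,y-t)) / (2*t)\<bar> \<le> Ka \<and> \<bar>((\<phi>0 (x,y+t) - \<phi>0 (x,y))/t - (\<phi>0 (x,y) - \<phi>0 (x,y-t))/t)/t\<bar> \<le> Ka"
    using alg_grid_bounds[OF gS a0, of "2*L"] by blast
  define p1 where "p1 = phi1 \<delta> \<phi>0"
  obtain Kb where Kb: "\<forall>x y t. 0 < t \<longrightarrow> 0 \<le> x - t \<longrightarrow> x + t \<le> 2*L \<longrightarrow> 0 \<le> y - t \<longrightarrow> y + t \<le> 2*L \<longrightarrow>
     \<bar>(p1 (x+t,y) - p1 (x-t,y)) / (2*t)\<bar> \<le> Kb \<and> \<bar>((p1 (x+t,y) - p1 (x,y))/t - (p1 (x,y) - p1 (x-t,y))/t)/t\<bar> \<le> Kb \<and>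
     \<bar>(p1 (x,y+t) - p1 (x,y-t)) / (2*t)\<bar> \<le> Kb \<and> \<bar>((p1 (x,y+t) - p1 (x,y))/t - (p1 (x,y) - p1 (x,y-t))/t)/t\<bar> \<le> Kb"
    using alg_grid_bounds[OF gS a1, of "2*L"] unfolding p1_def by blast
  have pp1: "periodic_L L p1" unfolding p1_def by (rule periodic_phi1[OF per])
  define Kd where "Kd = \<bar>Ka\<bar> + 4 * \<delta> * \<bar>Kb\<bar>"
  have Kd0: "Kd \<ge> 0" unfolding Kd_def using dl by simp
  show ?thesis
  proof (rule exI[of _ Kd], intro conjI[OF Kd0] allI impI ballI)
    fix M :: nat and u :: grid and t1 :: real and i j :: int
    assume M: "M \<ge> 1" and t1: "0 < t1" "t1 \<le> 8*\<delta>" and gp: "grid_periodic M u"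
      and rep0: "\<forall>i\<in>{0..int M}. \<forall>j\<in>{0..int M}. u i j = \<phi>0 (of_int i * (L / real M), of_int j * (L / real M))
        - t1 / 2 * phi1 \<delta> \<phi>0 (of_int i * (L / real M), of_int j * (L / real M))"
      and i: "i \<in> {1..int M}" and j: "j \<in> {1..int M}"
    define h where "h = L / real M"
    define G where "G = (\<lambda>p. \<phi>0 p - t1 / 2 * p1 p)"
    have pG: "periodic_L L G" using per pp1 unfolding G_def periodic_L_def by simp
    have rep: "\<forall>i\<in>{0..int M}. \<forall>j\<in>{0..int M}. u i j = G (of_int i * h, of_int j * h)"
      using rep0 unfolding G_def h_def p1_def by simp
    have R: "\<And>a b. a \<in> {0..int M + 1} \<Longrightarrow> b \<in> {0..int M + 1} \<Longrightarrow> u a b = G (of_int a * h, of_int b * h)"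
      by (rule ext_rep[OF gp M h_def pG rep])
    have hpos: "h > 0" unfolding h_def using L M by simp
    have hle: "h \<le> L" unfolding h_def using L M by (simp add: divide_le_eq)
    have Mh: "real M * h = L" using M unfolding h_def by simp
    define x where "x = of_int i * h"
    define y where "y = of_int j * h"
    have ix: "of_int (i+1) * h = x + h" "of_int (i-1) * h = x - h"
         "of_int (j+1) * h = y + h" "of_int (j-1) * h = y - h" unfolding x_def y_def by (simp_all add: algebra_simps)
    have u1: "u (i+1) j = G (x + h, y)" "u (i-1) j = G (x - h, y)" "u i (j+1) = G (x, y + h)" "u i (j-1) = G (x, y - h)"
         "u i j = G (x, y)"
      using R[of "i+1" j] R[of "i-1" j] R[of i "j+1"] R[of i "j-1"] R[of i j] i j ix unfolding x_def y_def by auto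
    have xb: "0 \<le> x - h" "x + h \<le> 2*L" "0 \<le> y - h" "y + h \<le> 2*L"
    proof -
      have "real_of_int i \<ge> 1" "real_of_int i \<le> real M" "real_of_int j \<ge> 1" "real_of_int j \<le> real M" using i j by auto
      then have "1 * h \<le> of_int i * h" "of_int i * h \<le> real M * h" "1 * h \<le> of_int j * h" "of_int j * h \<le> real M * h"
        using hpos by (simp_all add: mult_right_mono)
      then show "0 \<le> x - h" "x + h \<le> 2*L" "0 \<le> y - h" "y + h \<le> 2*L" unfolding x_def y_def using Mh hle by linarith+
    qed
    have A: "\<bar>(\<phi>0 (x+h,y) - \<phi>0 (x-h,y)) / (2*h)\<bar> \<le> Ka \<and> \<bar>((\<phi>0 (x+h,y) - \<phi>0 (x,y))/h - (\<phi>0 (x,y) - \<phi>0 (x-h,y))/h)/h\<bar> \<le> Ka \<and>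
     \<bar>(\<phi>0 (x,y+h) - \<phi>0 (x,y-h)) / (2*h)\<bar> \<le> Ka \<and> \<bar>((\<phi>0 (x,y+h) - \<phi>0 (x,y))/h - (\<phi>0 (x,y) - \<phi>0 (x,y-h))/h)/h\<bar> \<le> Ka"
      using Ka hpos xb by blast
    have B: "\<bar>(p1 (x+h,y) - p1 (x-h,y)) / (2*h)\<bar> \<le> Kb \<and> \<bar>((p1 (x+h,y) - p1 (x,y))/h - (p1 (x,y) - p1 (x-h,y))/h)/h\<bar> \<le> Kb \<and>
     \<bar>(p1 (x,y+h) - p1 (x,y-h)) / (2*h)\<bar> \<le> Kb \<and> \<bar>((p1 (x,y+h) - p1 (x,y))/h - (p1 (x,y) - p1 (x,y-h))/h)/h\<bar> \<le> Kb"
      using Kb hpos xb by blast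
    have comb: "\<bar>P - t1/2 * Q\<bar> \<le> Kd" if "\<bar>P\<bar> \<le> Ka" "\<bar>Q\<bar> \<le> Kb" for P Q
    proof -
      have "\<bar>t1/2 * Q\<bar> = t1/2 * \<bar>Q\<bar>" using t1 by (simp add: abs_mult)
      also have "\<dots> \<le> 4*\<delta> * \<bar>Kb\<bar>" using t1 that(2) by (intro mult_mono) auto
      finally show ?thesis unfolding Kd_def using that(1) by linarith
    qed
    have e1: "Dxc h u i j = (\<phi>0 (x+h,y) - \<phi>0 (x-h,y)) / (2*h) - t1/2 * ((p1 (x+h,y) - p1 (x-h,y)) / (2*h))"
      unfolding Dxc_def u1 G_def using hpos by (simp add: field_simps)
    have e2: "Dyc h u i j = (\<phi>0 (x,y+h) - \<phi>0 (x,y-h)) / (2*h) - t1/2 * ((p1 (x,y+h) - p1 (x,y-h)) / (2*h))"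
      unfolding Dyc_def u1 G_def using hpos by (simp add: field_simps)
    have e3: "dxx h u i j = ((\<phi>0 (x+h,y) - \<phi>0 (x,y))/h - (\<phi>0 (x,y) - \<phi>0 (x-h,y))/h)/h
       - t1/2 * (((p1 (x+h,y) - p1 (x,y))/h - (p1 (x,y) - p1 (x-h,y))/h)/h)"
      unfolding dxx_def u1 G_def using hpos by (simp add: field_simps)
    have e4: "dyy h u i j = ((\<phi>0 (x,y+h) - \<phi>0 (x,y))/h - (\<phi>0 (x,y) - \<phi>0 (x,y-h))/h)/h
       - t1/2 * (((p1 (x,y+h) - p1 (x,y))/h - (p1 (x,y) - p1 (x,y-h))/h)/h)"
      unfolding dyy_def u1 G_def using hpos by (simp add: field_simps)
    have b1: "\<bar>Dxc h u i j\<bar> \<le> Kd" unfolding e1 using A B comb by blast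
    have b2: "\<bar>Dyc h u i j\<bar> \<le> Kd" unfolding e2 using A B comb by blast
    have b3: "\<bar>dxx h u i j\<bar> \<le> Kd" unfolding e3 using A B comb by blast
    have b4: "\<bar>dyy h u i j\<bar> \<le> Kd" unfolding e4 using A B comb by blast
    have b5: "\<bar>lap_h h u i j\<bar> \<le> 2 * Kd" unfolding lap_h_def using b3 b4 by linarith
    show "\<bar>Dxc (L / real M) u i j\<bar> \<le> Kd \<and> \<bar>Dyc (L / real M) u i j\<bar> \<le> Kd \<and> \<bar>lap_h (L / real M) u i j\<bar> \<le> 2 * Kd"
      using b1 b2 b5 unfolding h_def by blast
  qed
qed




lemma bdf_core: "0 < q \<Longrightarrow> 0 < (tm::real) \<Longrightarrow> 2 * ((1 + 2*q\<^sup>2) / ((q\<^sup>2 * tm) * (1 + q\<^sup>2)) * a - (q\<^sup>2)\<^sup>2 / ((q\<^sup>2 * tm) * (1 + q\<^sup>2)) * b) * a -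
         (((2 + 4*q\<^sup>2 - q\<^sup>2 * q) / (1 + q\<^sup>2)) / (q\<^sup>2 * tm) * a\<^sup>2 - (q\<^sup>2 * q / (1 + q\<^sup>2)) / tm * b\<^sup>2)
        \<ge> 0"
proof -
  assume q: "0 < q" and t: "0 < tm"
  define k where "k = 1 / ((q\<^sup>2 * tm) * (1 + q\<^sup>2))"
  have kp: "k > 0" unfolding k_def using q t by (simp add: add_pos_nonneg)
  have n1: "1 + q\<^sup>2 \<noteq> 0" by (smt (verit) zero_le_power2)
  have qn: "q \<noteq> 0" "tm \<noteq> 0" using q t by auto
  have e1: "(1 + 2*q\<^sup>2) / ((q\<^sup>2 * tm) * (1 + q\<^sup>2)) = (1 + 2*q\<^sup>2) * k" unfolding k_def by simp
  have e2: "(q\<^sup>2)\<^sup>2 / ((q\<^sup>2 * tm) * (1 + q\<^sup>2)) = (q\<^sup>2)\<^sup>2 * k" unfolding k_def by simp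
  have e3: "((2 + 4*q\<^sup>2 - q\<^sup>2 * q) / (1 + q\<^sup>2)) / (q\<^sup>2 * tm) = (2 + 4*q\<^sup>2 - q\<^sup>2 * q) * k" unfolding k_def by simp
  have e4: "(q\<^sup>2 * q / (1 + q\<^sup>2)) / tm = q\<^sup>2 * q * q\<^sup>2 * k"
  proof -
    have "q\<^sup>2 * q * q\<^sup>2 * k = (q\<^sup>2 * (q\<^sup>2 * q)) / (q\<^sup>2 * (tm * (1 + q\<^sup>2)))" unfolding k_def by (simp add: ac_simps)
    also have "\<dots> = (q\<^sup>2 * q) / (tm * (1 + q\<^sup>2))" using qn by (intro nonzero_mult_divide_mult_cancel_left) simp
    also have "\<dots> = (q\<^sup>2 * q / (1 + q\<^sup>2)) / tm" by (simp add: ac_simps)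
    finally show ?thesis by simp
  qed
  have "2 * ((1 + 2*q\<^sup>2) * k * a - (q\<^sup>2)\<^sup>2 * k * b) * a - ((2 + 4*q\<^sup>2 - q\<^sup>2 * q) * k * a\<^sup>2 - q\<^sup>2 * q * q\<^sup>2 * k * b\<^sup>2)
     = k * (q\<^sup>2 * q) * (a - q * b)\<^sup>2" by (simp add: power2_eq_square algebra_simps)
  moreover have "k * (q\<^sup>2 * q) * (a - q * b)\<^sup>2 \<ge> 0" using kp q by simp
  ultimately show ?thesis unfolding e1 e2 e3 e4 by linarith
qed

lemma bdf2_pt:
  fixes tn tm r a b :: real
  assumes tn: "tn > 0" and tm: "tm > 0" and r: "r = tn / tm"
  shows "2 * ((1 + 2*r) / (tn * (1 + r)) * a - r\<^sup>2 / (tn * (1 + r)) * b) * a \<ge>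
         ((2 + 4*r - r powr (3/2)) / (1 + r)) / tn * a\<^sup>2 - (r powr (3/2) / (1 + r)) / tm * b\<^sup>2"
proof -
  have rp: "r > 0" using r tn tm by simp
  define q where "q = sqrt r"
  have qp: "q > 0" using rp unfolding q_def by simp
  have rq: "r = q\<^sup>2" using rp unfolding q_def by simp
  have pw: "r powr (3/2) = r * q"
  proof -
    have "r powr (3/2) = r powr (1 + 1/2)" by simp
    also have "\<dots> = r powr 1 * r powr (1/2)" by (rule powr_add)
    also have "\<dots> = r * q" using rp unfolding q_def by (simp add: powr_half_sqrt)
    finally show ?thesis .
  qed
  have tnr: "tn = q\<^sup>2 * tm" using r tm rq by simp
  have "r powr (3/2) = q\<^sup>2 * q" using pw rq by simp
  then show ?thesis using bdf_core[OF qp tm, of a b] unfolding tnr rq by (simp add: algebra_simps)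
qed

lemma sqrt_le_1p: "x \<ge> 0 \<Longrightarrow> sqrt x \<le> 1 + (x::real)"
proof -
  assume x: "x \<ge> 0"
  have "x \<le> (1 + x)\<^sup>2" using x by (simp add: power2_eq_square algebra_simps)
  then have "sqrt x \<le> sqrt ((1 + x)\<^sup>2)" by (rule real_sqrt_le_mono)
  then show ?thesis using x by simp
qed

lemma root4_le_1p: "x \<ge> 0 \<Longrightarrow> root 4 x \<le> 1 + (x::real)"
proof (rule ccontr)
  assume x: "x \<ge> 0" and c: "\<not> root 4 x \<le> 1 + x"
  have "(1 + x) ^ 4 < (root 4 x) ^ 4" using c x by (intro power_strict_mono) auto
  moreover have "(root 4 x) ^ 4 = x" using x by (simp add: real_root_pow_pos2)
  moreover have "x \<le> (1 + x) ^ 4"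
  proof -
    have "1 + x \<le> (1 + x) ^ 4" using x by (intro power_increasing[where n=1, simplified]) auto
    then show ?thesis by simp
  qed
  ultimately show False by simp
qed

lemma sq_le: "\<bar>x\<bar> \<le> K \<Longrightarrow> x\<^sup>2 \<le> (K::real)\<^sup>2"
  by (metis abs_ge_zero power2_abs power_mono)




lemma sq_aux: "(x::real)\<^sup>2 \<le> 2*(x-1)\<^sup>2 + 2"
proof -
  have "2*(x-1)\<^sup>2 + 2 - x\<^sup>2 = (x-2)\<^sup>2" by (simp add: power2_eq_square algebra_simps)
  then show ?thesis using zero_le_power2[of "x-2"] by linarith
qed

lemma min_step:
  fixes t d a b :: real
  assumes "t < 4*d*min a b" "d > 0" shows "t < 4*d*a" "t < 4*d*b"
proof -
  have "4*d*min a b \<le> 4*d*a" "4*d*min a b \<le> 4*d*b" using assms(2) by (simp_all add: mult_left_mono)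
  then show "t < 4*d*a" "t < 4*d*b" using assms(1) by linarith+
qed

theorem lemma2p3:
  fixes L \<delta> r\<^sub>s :: real and \<phi>0 :: "real \<times> real \<Rightarrow> real"
  assumes "L > 0" and "\<delta> > 0" and "0 < r\<^sub>s" and "r\<^sub>s < 4.864"
    and "smooth_fun \<phi>0" and "periodic_L L \<phi>0"
  shows "\<exists>C0. \<forall>(M::nat) (N::nat) (\<tau>::nat \<Rightarrow> real) (rN1::real) (u::nat \<Rightarrow> grid).
           M \<ge> 1 \<longrightarrow> N \<ge> 1 \<longrightarrow>
           (\<forall>n\<in>{1..N}. \<tau> n > 0) \<longrightarrow>
           0 < rN1 \<longrightarrow> rN1 \<le> r\<^sub>s \<longrightarrow>
           (\<forall>k\<in>{2..N}. ratio \<tau> N rN1 k \<le> r\<^sub>s) \<longrightarrow>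
           (\<forall>n\<in>{1..N}. \<tau> n < 4 * \<delta> * min (R_L (ratio \<tau> N rN1 n) (ratio \<tau> N rN1 (n+1)))
                                             ((2 + ratio \<tau> N rN1 2) / (1 + ratio \<tau> N rN1 2))) \<longrightarrow>
           is_bdf2_solution L \<delta> \<phi>0 M N \<tau> u \<longrightarrow>
           (\<forall>n\<in>{1..N}. max (grad_l2norm M (L / real M) (u n))
                             (max (grad_l4norm M (L / real M) (u n)) (l2norm M (L / real M) (lap_h (L / real M) (u n))))
                         \<le> C0)"
proof -
  note L = assms(1) and dl = assms(2)
  obtain Kd where Kd0: "Kd \<ge> 0" and KdP: "\<forall>M u t1. M \<ge> 1 \<longrightarrow> 0 < t1 \<longrightarrow> t1 \<le> 8*\<delta> \<longrightarrow> grid_periodic M u \<longrightarrow>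
     (\<forall>i\<in>{0..int M}. \<forall>j\<in>{0..int M}. u i j = \<phi>0 (of_int i * (L / real M), of_int j * (L / real M))
        - t1 / 2 * phi1 \<delta> \<phi>0 (of_int i * (L / real M), of_int j * (L / real M))) \<longrightarrow>
     (\<forall>i\<in>{1..int M}. \<forall>j\<in>{1..int M}. \<bar>Dxc (L / real M) u i j\<bar> \<le> Kd \<and> \<bar>Dyc (L / real M) u i j\<bar> \<le> Kd
        \<and> \<bar>lap_h (L / real M) u i j\<bar> \<le> 2 * Kd)"
    using init_bound[OF assms(1,2,5,6)] by blast
  define B where "B = L\<^sup>2 * (\<delta> * (2*Kd)\<^sup>2 + (2*Kd\<^sup>2 + 1)\<^sup>2 / 2)"
  have B0: "B \<ge> 0" unfolding B_def using dl by simp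
  define C0 where "C0 = 1 + B/\<delta> + 4*B + 3*L\<^sup>2"
  show ?thesis
  proof (rule exI[of _ C0], intro allI impI ballI)
    fix M N :: nat and \<tau> :: "nat \<Rightarrow> real" and rN1 :: real and u :: "nat \<Rightarrow> grid" and n :: nat
    assume M: "M \<ge> 1" and N: "N \<ge> 1" and tp: "\<forall>n\<in>{1..N}. \<tau> n > 0" and rN1: "0 < rN1" "rN1 \<le> r\<^sub>s"
      and rat: "\<forall>k\<in>{2..N}. ratio \<tau> N rN1 k \<le> r\<^sub>s"
      and stp: "\<forall>n\<in>{1..N}. \<tau> n < 4 * \<delta> * min (R_L (ratio \<tau> N rN1 n) (ratio \<tau> N rN1 (n+1)))
                                             ((2 + ratio \<tau> N rN1 2) / (1 + ratio \<tau> N rN1 2))"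
      and sol: "is_bdf2_solution L \<delta> \<phi>0 M N \<tau> u" and n: "n \<in> {1..N}"
    define h where "h = L / real M"
    have hpos: "h > 0" unfolding h_def using L M by simp
    have hM: "h * real M = L" unfolding h_def using M by simp
    have gpu: "\<And>k. k \<le> N \<Longrightarrow> grid_periodic M (u k)"
      and init: "\<forall>i\<in>{0..int M}. \<forall>j\<in>{0..int M}. u 0 i j = \<phi>0 (of_int i * (L / real M), of_int j * (L / real M))
        - \<tau> 1 / 2 * phi1 \<delta> \<phi>0 (of_int i * (L / real M), of_int j * (L / real M))"
      and eqs: "\<And>k i j. k \<in> {1..N} \<Longrightarrow> i \<in> {1..int M} \<Longrightarrow> j \<in> {1..int M} \<Longrightarrow>
          D2 \<tau> u k i j + \<delta> * lap_h h (lap_h h (u k)) i j - divf_h h (u k) i j = 0"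
      using sol unfolding is_bdf2_solution_def Let_def h_def by auto
    define r where "r k = ratio \<tau> N rN1 k" for k
    define c where "c k = r k powr (3/2) / (1 + r k)" for k
    define w where "w k = (\<lambda>i j. u k i j - u (k-1) i j)" for k
    define E where "E k = \<delta> * Lapn M h (u k) + 2 * Fn M h (u k) + c (k+1) / \<tau> k * Wn M h (w k)" for k
    define E0 where "E0 = \<delta> * Lapn M h (u 0) + 2 * Fn M h (u 0)"
    have r1: "r 1 = 0" unfolding r_def ratio_def by simp
    have rk: "r k = \<tau> k / \<tau> (k-1)" if "2 \<le> k" "k \<le> N" for k
      unfolding r_def ratio_def using that by auto
    have rpos: "r k > 0" if "2 \<le> k" "k \<le> N + 1" for k
    proof (cases "k = N + 1")
      case True then show ?thesis unfolding r_def ratio_def using rN1 N by simp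
    next
      case False
      then have "k \<le> N" using that by simp
      moreover have "k - 1 \<in> {1..N}" "k \<in> {1..N}" using \<open>k \<le> N\<close> that by auto
      ultimately have "\<tau> k > 0" "\<tau> (k-1) > 0" using tp by blast+
      then show ?thesis using rk[of k] \<open>k \<le> N\<close> that by simp
    qed
    have cnn: "c k \<ge> 0" if "2 \<le> k" "k \<le> N + 1" for k
      unfolding c_def using rpos[OF that] by simp
    have t1: "\<tau> 1 > 0" using tp N by simp
    have t18: "\<tau> 1 \<le> 8 * \<delta>"
    proof -
      have "\<tau> 1 < 4 * \<delta> * min (R_L (r 1) (r 2)) ((2 + r 2) / (1 + r 2))"
        using bspec[OF stp, of 1] N unfolding r_def by (simp add: numeral_2_eq_2)
      then have "\<tau> 1 < 4 * \<delta> * ((2 + r 2) / (1 + r 2))" using min_step dl by blast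
      moreover have "(2 + r 2) / (1 + r 2) \<le> 2" using rpos[of 2] N by (simp add: divide_le_eq)
      ultimately show ?thesis using dl mult_left_mono[of "(2 + r 2) / (1 + r 2)" 2 "4 * \<delta>"] by linarith
    qed
    have Lnn: "Lapn M h v \<ge> 0" for v unfolding Lapn_def by (rule gs_nonneg) simp
    have Fnn: "Fn M h v \<ge> 0" for v unfolding Fn_def by (rule gs_nonneg) simp
    have Wnn: "Wn M h v \<ge> 0" for v unfolding Wn_def by (rule gs_nonneg) simp
    
    have E0B: "E0 \<le> B"
    proof -
      have bd: "\<forall>i\<in>{1..int M}. \<forall>j\<in>{1..int M}. \<bar>Dxc h (u 0) i j\<bar> \<le> Kd \<and> \<bar>Dyc h (u 0) i j\<bar> \<le> Kd
        \<and> \<bar>lap_h h (u 0) i j\<bar> \<le> 2 * Kd"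
        using KdP M t1 t18 gpu[of 0] init unfolding h_def by blast
      have "Lapn M h (u 0) \<le> grid_sum M h (\<lambda>i j. (2*Kd)\<^sup>2)"
        unfolding Lapn_def by (rule gs_mono) (use bd sq_le in blast)
      also have "\<dots> = L\<^sup>2 * (2*Kd)\<^sup>2" unfolding gs_const using hM by (simp add: mult.commute)
      finally have l: "Lapn M h (u 0) \<le> L\<^sup>2 * (2*Kd)\<^sup>2" .
      have "Fn M h (u 0) \<le> grid_sum M h (\<lambda>i j. (2*Kd\<^sup>2 + 1)\<^sup>2 / 4)"
        unfolding Fn_def
      proof (rule gs_mono)
        fix i j assume ij: "i \<in> {1..int M}" "j \<in> {1..int M}"
        have "(Dxc h (u 0) i j)\<^sup>2 \<le> Kd\<^sup>2" "(Dyc h (u 0) i j)\<^sup>2 \<le> Kd\<^sup>2" using bd ij sq_le by blast+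
        moreover have "0 \<le> (Dxc h (u 0) i j)\<^sup>2" "0 \<le> (Dyc h (u 0) i j)\<^sup>2" by simp_all
        moreover have "0 \<le> Kd\<^sup>2" by simp
        ultimately have "\<bar>(Dxc h (u 0) i j)\<^sup>2 + (Dyc h (u 0) i j)\<^sup>2 - 1\<bar> \<le> 2*Kd\<^sup>2 + 1" unfolding abs_le_iff by linarith
        then have "((Dxc h (u 0) i j)\<^sup>2 + (Dyc h (u 0) i j)\<^sup>2 - 1)\<^sup>2 \<le> (2*Kd\<^sup>2 + 1)\<^sup>2" by (rule sq_le)
        then show "((Dxc h (u 0) i j)\<^sup>2 + (Dyc h (u 0) i j)\<^sup>2 - 1)\<^sup>2 / 4 \<le> (2*Kd\<^sup>2 + 1)\<^sup>2 / 4" by simp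
      qed
      also have "\<dots> = L\<^sup>2 * ((2*Kd\<^sup>2 + 1)\<^sup>2 / 4)" unfolding gs_const using hM by (simp add: mult.commute)
      finally have f: "Fn M h (u 0) \<le> L\<^sup>2 * ((2*Kd\<^sup>2 + 1)\<^sup>2 / 4)" .
      have "\<delta> * Lapn M h (u 0) \<le> \<delta> * (L\<^sup>2 * (2*Kd)\<^sup>2)" using l dl by simp
      then show ?thesis unfolding E0_def B_def using f by (simp add: algebra_simps)
    qed
    
    have dec: "E k \<le> E0" if "1 \<le> k" "k \<le> N" for k
      using that
    proof (induction k rule: dec_induct)
      case base
      have st: "grid_sum M h (\<lambda>i j. 2 * D2 \<tau> u 1 i j * w 1 i j) + \<delta> * Lapn M h (u 1) + 2 * Fn M h (u 1)
         \<le> \<delta> * Lapn M h (u 0) + 2 * Fn M h (u 0) + Wn M h (w 1) / (4 * \<delta>)"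
        by (rule energy_step[OF gpu gpu _ dl]) (use N hpos eqs in \<open>auto simp: w_def\<close>)
      have g1: "grid_sum M h (\<lambda>i j. 2 * D2 \<tau> u 1 i j * w 1 i j) = (4 / \<tau> 1) * Wn M h (w 1)"
        unfolding Wn_def gs_scale[symmetric] by (rule gs_cong) (simp add: D2_def w_def power2_eq_square)
      have RL: "R_L (r 1) (r 2) = 2 - c 2" unfolding r1 R_L_def c_def by simp
      have "\<tau> 1 < 4 * \<delta> * min (R_L (r 1) (r 2)) ((2 + r 2) / (1 + r 2))"
        using bspec[OF stp, of 1] N unfolding r_def by (simp add: numeral_2_eq_2)
      then have "\<tau> 1 < 4 * \<delta> * (2 - c 2)" using min_step dl unfolding RL by blast
      then have a: "4*\<delta>*c 2 + \<tau> 1 \<le> 16*\<delta>" using dl by (simp add: algebra_simps)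
      have "c 2 / \<tau> 1 + 1 / (4 * \<delta>) = (4*\<delta>*c 2 + \<tau> 1) / (4*\<delta>*\<tau> 1)" using t1 dl by (simp add: field_simps)
      also have "\<dots> \<le> (16*\<delta>) / (4*\<delta>*\<tau> 1)" by (rule divide_right_mono[OF a]) (use t1 dl in simp)
      also have "\<dots> = 4 / \<tau> 1" using dl t1 by (simp add: field_simps)
      finally have co: "c 2 / \<tau> 1 + 1 / (4 * \<delta>) \<le> 4 / \<tau> 1" .
      have "(c 2 / \<tau> 1) * Wn M h (w 1) + Wn M h (w 1) / (4 * \<delta>) \<le> (4 / \<tau> 1) * Wn M h (w 1)"
        using mult_right_mono[OF co Wnn[of "w 1"]] by (simp add: algebra_simps)
      moreover have E1: "E 1 = \<delta> * Lapn M h (u 1) + 2 * Fn M h (u 1) + c 2 / \<tau> 1 * Wn M h (w 1)"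
        unfolding E_def by (simp add: numeral_2_eq_2)
      ultimately show ?case using st g1 unfolding E0_def by linarith
    next
      case (step k)
      have k2: "2 \<le> Suc k" "Suc k \<le> N" using step by auto
      have st: "grid_sum M h (\<lambda>i j. 2 * D2 \<tau> u (Suc k) i j * w (Suc k) i j) + \<delta> * Lapn M h (u (Suc k)) + 2 * Fn M h (u (Suc k))
         \<le> \<delta> * Lapn M h (u k) + 2 * Fn M h (u k) + Wn M h (w (Suc k)) / (4 * \<delta>)"
        by (rule energy_step[OF gpu gpu _ dl]) (use k2 hpos eqs in \<open>auto simp: w_def\<close>)
      define a where "a = (2 + 4 * r (Suc k) - r (Suc k) powr (3/2)) / (1 + r (Suc k))"
      have tk: "\<tau> k > 0" "\<tau> (Suc k) > 0" using tp step k2 by auto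
      have g1: "grid_sum M h (\<lambda>i j. 2 * D2 \<tau> u (Suc k) i j * w (Suc k) i j) \<ge>
          a / \<tau> (Suc k) * Wn M h (w (Suc k)) - c (Suc k) / \<tau> k * Wn M h (w k)"
      proof -
        have "grid_sum M h (\<lambda>i j. a / \<tau> (Suc k) * (w (Suc k) i j)\<^sup>2 - c (Suc k) / \<tau> k * (w k i j)\<^sup>2)
           \<le> grid_sum M h (\<lambda>i j. 2 * D2 \<tau> u (Suc k) i j * w (Suc k) i j)"
        proof (rule gs_mono)
          fix i j
          have rr: "r (Suc k) = \<tau> (Suc k) / \<tau> k" using rk[OF k2] by simp
          have "2 * ((1 + 2*r (Suc k)) / (\<tau> (Suc k) * (1 + r (Suc k))) * w (Suc k) i j - (r (Suc k))\<^sup>2 / (\<tau> (Suc k) * (1 + r (Suc k))) * w k i j) * w (Suc k) i j \<ge>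
            ((2 + 4*r (Suc k) - r (Suc k) powr (3/2)) / (1 + r (Suc k))) / \<tau> (Suc k) * (w (Suc k) i j)\<^sup>2 - (r (Suc k) powr (3/2) / (1 + r (Suc k))) / \<tau> k * (w k i j)\<^sup>2"
            by (rule bdf2_pt[OF tk(2) tk(1) rr])
          moreover have "D2 \<tau> u (Suc k) i j = (1 + 2*r (Suc k)) / (\<tau> (Suc k) * (1 + r (Suc k))) * w (Suc k) i j - (r (Suc k))\<^sup>2 / (\<tau> (Suc k) * (1 + r (Suc k))) * w k i j"
            unfolding D2_def w_def rr Let_def using k2 by (simp add: numeral_2_eq_2)
          ultimately show "a / \<tau> (Suc k) * (w (Suc k) i j)\<^sup>2 - c (Suc k) / \<tau> k * (w k i j)\<^sup>2 \<le> 2 * D2 \<tau> u (Suc k) i j * w (Suc k) i j"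
            unfolding a_def c_def by simp
        qed
        then show ?thesis unfolding gs_diff gs_scale Wn_def by simp
      qed
      have aR: "a = R_L (r (Suc k)) (r (Suc (Suc k))) + c (Suc (Suc k))"
        unfolding a_def R_L_def c_def by simp
      have "\<tau> (Suc k) < 4 * \<delta> * min (R_L (r (Suc k)) (r (Suc k + 1))) ((2 + r 2) / (1 + r 2))"
        using bspec[OF stp, of "Suc k"] k2 unfolding r_def by simp
      then have "\<tau> (Suc k) < 4 * \<delta> * R_L (r (Suc k)) (r (Suc k + 1))" by (rule min_step(1)[OF _ dl])
      then have RR: "\<tau> (Suc k) < 4 * \<delta> * R_L (r (Suc k)) (r (Suc (Suc k)))" by simp
      have co: "1 / (4 * \<delta>) \<le> R_L (r (Suc k)) (r (Suc (Suc k))) / \<tau> (Suc k)"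
      proof -
        have "\<tau> (Suc k) / (4 * \<delta>) < R_L (r (Suc k)) (r (Suc (Suc k)))"
          using RR dl by (simp add: pos_divide_less_eq mult.commute)
        then have "1 / (4 * \<delta>) * \<tau> (Suc k) \<le> R_L (r (Suc k)) (r (Suc (Suc k)))" by simp
        then show ?thesis using tk by (simp add: le_divide_eq)
      qed
      have "Wn M h (w (Suc k)) / (4 * \<delta>) \<le> (R_L (r (Suc k)) (r (Suc (Suc k))) / \<tau> (Suc k)) * Wn M h (w (Suc k))"
        using mult_right_mono[OF co Wnn[of "w (Suc k)"]] by simp
      moreover have "a / \<tau> (Suc k) * Wn M h (w (Suc k)) = (R_L (r (Suc k)) (r (Suc (Suc k))) / \<tau> (Suc k)) * Wn M h (w (Suc k))
          + c (Suc (Suc k)) / \<tau> (Suc k) * Wn M h (w (Suc k))"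
        unfolding aR by (simp add: add_divide_distrib distrib_right)
      ultimately have "E (Suc k) \<le> E k"
        using st g1 unfolding E_def by simp
      then show ?case using step by simp
    qed
    have EnB: "E n \<le> B" using dec[of n] n E0B by simp
    have cn: "c (n+1) / \<tau> n * Wn M h (w n) \<ge> 0"
    proof -
      have "\<tau> n > 0" using tp n by blast
      moreover have "c (n+1) \<ge> 0" using cnn[of "n+1"] n by simp
      ultimately show ?thesis using Wnn[of "w n"] by simp
    qed
    have lapB: "\<delta> * Lapn M h (u n) \<le> B" and FB: "2 * Fn M h (u n) \<le> B"
    proof -
      have "\<delta> * Lapn M h (u n) \<ge> 0" using dl Lnn[of "u n"] by simp
      then show "\<delta> * Lapn M h (u n) \<le> B" "2 * Fn M h (u n) \<le> B"
        using EnB cn Fnn[of "u n"] unfolding E_def by linarith+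
    qed
    define q where "q i j = (Dxc h (u n) i j)\<^sup>2 + (Dyc h (u n) i j)\<^sup>2" for i j
    have q0: "q i j \<ge> 0" for i j unfolding q_def by simp
    have Q2: "grid_sum M h (\<lambda>i j. (q i j)\<^sup>2) \<le> 4 * B + 2 * L\<^sup>2"
    proof -
      have "grid_sum M h (\<lambda>i j. (q i j)\<^sup>2) \<le> grid_sum M h (\<lambda>i j. 8 * (((Dxc h (u n) i j)\<^sup>2 + (Dyc h (u n) i j)\<^sup>2 - 1)\<^sup>2 / 4) + 2)"
      proof (rule gs_mono)
        fix i j
        have "(q i j)\<^sup>2 \<le> 2 * (q i j - 1)\<^sup>2 + 2" by (rule sq_aux)
        then show "(q i j)\<^sup>2 \<le> 8 * (((Dxc h (u n) i j)\<^sup>2 + (Dyc h (u n) i j)\<^sup>2 - 1)\<^sup>2 / 4) + 2" unfolding q_def by simp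
      qed
      also have "\<dots> = 8 * Fn M h (u n) + 2 * L\<^sup>2" unfolding gs_add gs_scale Fn_def gs_const using hM by (simp add: mult.commute)
      finally show ?thesis using FB by simp
    qed
    have Q1: "grid_sum M h q \<le> 4 * B + 3 * L\<^sup>2"
    proof -
      have "grid_sum M h q \<le> grid_sum M h (\<lambda>i j. (1/2) * (q i j)\<^sup>2 + 1/2)"
      proof (rule gs_mono)
        fix i j
        have "0 \<le> (q i j - 1)\<^sup>2" by simp
        then show "q i j \<le> (1/2) * (q i j)\<^sup>2 + 1/2" by (simp add: power2_eq_square algebra_simps)
      qed
      also have "\<dots> = (1/2) * grid_sum M h (\<lambda>i j. (q i j)\<^sup>2) + L\<^sup>2 / 2" unfolding gs_add gs_scale gs_const using hM by (simp add: mult.commute)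
      finally show ?thesis using Q2 B0 zero_le_power2[of L] by linarith
    qed
    have n1: "l2norm M h (lap_h h (u n)) \<le> C0"
    proof -
      have "l2norm M h (lap_h h (u n)) = sqrt (Lapn M h (u n))" unfolding l2norm_def Lapn_def by simp
      also have "\<dots> \<le> 1 + Lapn M h (u n)" by (rule sqrt_le_1p[OF Lnn])
      also have "\<dots> \<le> 1 + B / \<delta>" using lapB dl by (simp add: le_divide_eq mult.commute)
      finally show ?thesis unfolding C0_def using B0 zero_le_power2[of L] by linarith
    qed
    have n2: "grad_l2norm M h (u n) \<le> C0"
    proof -
      have "grad_l2norm M h (u n) = sqrt (grid_sum M h q)" unfolding grad_l2norm_def q_def by simp
      also have "\<dots> \<le> 1 + grid_sum M h q" by (rule sqrt_le_1p) (rule gs_nonneg[OF q0])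
      moreover have "B / \<delta> \<ge> 0" using B0 dl by simp
      ultimately show ?thesis unfolding C0_def using Q1 by linarith
    qed
    have n3: "grad_l4norm M h (u n) \<le> C0"
    proof -
      have e: "(sqrt (q i j)) ^ 4 = (q i j)\<^sup>2" for i j
      proof -
        have "(sqrt (q i j)) ^ 4 = ((sqrt (q i j))\<^sup>2)\<^sup>2" by simp
        then show ?thesis using q0 by simp
      qed
      have "grad_l4norm M h (u n) = root 4 (grid_sum M h (\<lambda>i j. (q i j)\<^sup>2))" unfolding grad_l4norm_def q_def[symmetric] e by simp
      also have "\<dots> \<le> 1 + grid_sum M h (\<lambda>i j. (q i j)\<^sup>2)" by (rule root4_le_1p) (rule gs_nonneg, simp)
      moreover have "B / \<delta> \<ge> 0" using B0 dl by simp
      moreover have "L\<^sup>2 \<ge> 0" by simp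
      ultimately show ?thesis unfolding C0_def using Q2 by linarith
    qed
    show "max (grad_l2norm M (L / real M) (u n))
             (max (grad_l4norm M (L / real M) (u n)) (l2norm M (L / real M) (lap_h (L / real M) (u n)))) \<le> C0"
      using n1 n2 n3 unfolding h_def by simp
  qed
qed


end
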